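(* Let $d\ge 4$ and let $G=\mathrm{GL}_d(2)$ act naturally on the set of $2$-dimensional subspaces of $\mathbb{F}_2^d$. Then $G$ is not $\mathrm{IBIS}$.
   Context: A base of a permutation group $G$ on $\Omega$ is a sequence $(\omega_1,\dots,\omega_\ell)$ of points with trivial pointwise stabilizer; it is irredundant if $G>G_{\omega_1}>\cdots>G_{\omega_1,\dots,\omega_\ell}=1$. $G$ is $\mathrm{IBIS}$ if all irredundant bases of $G$ have the same cardinality. *)

theory Defs
  imports "HOL-Analysis.Analysis" "HOL-Library.Z2"
begin

text \<open>The permutation group is the image of G in Sym(\<Omega>); an element of it is trivial
  iff the corresponding group element fixes every point of \<Omega>.  Hence the pointwise
  stabiliser of a set S in the permutation group is trivial iff the preimage
  pstab G act S equals pstab G act \<Omega> (the kernel), and strict inclusions of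
  stabilisers in the permutation group correspond to strict inclusions of preimages.\<close>

definition pstab :: "'g set \<Rightarrow> ('g \<Rightarrow> 'x \<Rightarrow> 'x) \<Rightarrow> 'x set \<Rightarrow> 'g set" where
  "pstab G act S = {g \<in> G. \<forall>x\<in>S. act g x = x}"

definition is_base :: "'g set \<Rightarrow> ('g \<Rightarrow> 'x \<Rightarrow> 'x) \<Rightarrow> 'x set \<Rightarrow> 'x list \<Rightarrow> bool" where
  "is_base G act \<Omega> b \<longleftrightarrow> set b \<subseteq> \<Omega> \<and> pstab G act (set b) = pstab G act \<Omega>"

definition irredundant_base :: "'g set \<Rightarrow> ('g \<Rightarrow> 'x \<Rightarrow> 'x) \<Rightarrow> 'x set \<Rightarrow> 'x list \<Rightarrow> bool" where
  "irredundant_base G act \<Omega> b \<longleftrightarrow> is_base G act \<Omega> b \<and>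
     (\<forall>i < length b. pstab G act (set (take (Suc i) b)) \<subset> pstab G act (set (take i b)))"

definition IBIS :: "'g set \<Rightarrow> ('g \<Rightarrow> 'x \<Rightarrow> 'x) \<Rightarrow> 'x set \<Rightarrow> bool" where
  "IBIS G act \<Omega> \<longleftrightarrow> (\<forall>b1 b2. irredundant_base G act \<Omega> b1 \<longrightarrow> irredundant_base G act \<Omega> b2
                         \<longrightarrow> length b1 = length b2)"

text \<open>GL_d(2) as invertible d x d matrices over the field bit = F_2, with d = CARD('n),
  acting naturally on the set of 2-dimensional subspaces of F_2^d.\<close>

definition GL2 :: "(bit ^ 'n ^ 'n) set" where
  "GL2 = {A. invertible A}"

definition subspaces2 :: "(bit ^ 'n) set set" where
  "subspaces2 = {W. vec.subspace W \<and> vec.dim W = 2}"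

definition mat_act :: "bit ^ 'n ^ 'n \<Rightarrow> (bit ^ 'n) set \<Rightarrow> (bit ^ 'n) set" where
  "mat_act A W = (\<lambda>v. A *v v) ` W"

end

theory Submission
  imports Defs
begin
definition strict_chain :: "'g set \<Rightarrow> ('g \<Rightarrow> 'x \<Rightarrow> 'x) \<Rightarrow> 'x list \<Rightarrow> bool" where
  "strict_chain G act b \<longleftrightarrow>
     (\<forall>i < length b. pstab G act (set (take (Suc i) b)) \<subset> pstab G act (set (take i b)))"

lemma pstab_Un: "pstab G act (A \<union> B) = pstab G act A \<inter> pstab G act B"
  unfolding pstab_def by auto

lemma pstab_anti: "A \<subseteq> B \<Longrightarrow> pstab G act B \<subseteq> pstab G act A"
  unfolding pstab_def by auto

lemma strict_chain_Nil: "strict_chain G act []"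
  by (simp add: strict_chain_def)

lemma strict_chain_snoc:
  assumes "strict_chain G act p" "pstab G act (set p \<union> {x}) \<subset> pstab G act (set p)"
  shows "strict_chain G act (p @ [x])"
  unfolding strict_chain_def
proof (intro allI impI)
  fix i assume i: "i < length (p @ [x])"
  show "pstab G act (set (take (Suc i) (p @ [x]))) \<subset> pstab G act (set (take i (p @ [x])))"
  proof (cases "i < length p")
    case True
    then have "Suc i \<le> length p" by simp
    then show ?thesis using assms(1) True unfolding strict_chain_def by auto
  next
    case False
    then have "i = length p" using i by simp
    then show ?thesis using assms(2) by (simp add: Un_commute)
  qed
qed

lemma extend_base:
  assumes "strict_chain G act p" "set p \<subseteq> \<Omega>" "set q \<subseteq> \<Omega>"
    "pstab G act (set p \<union> set q) = pstab G act \<Omega>"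
  shows "\<exists>b. irredundant_base G act \<Omega> b \<and> length p \<le> length b \<and> length b \<le> length p + length q"
  using assms
proof (induction q arbitrary: p)
  case Nil
  then show ?case
    by (intro exI[of _ p]) (auto simp: irredundant_base_def is_base_def strict_chain_def)
next
  case (Cons x q)
  show ?case
  proof (cases "pstab G act (set p \<union> {x}) \<subset> pstab G act (set p)")
    case True
    have "\<exists>b. irredundant_base G act \<Omega> b \<and> length (p@[x]) \<le> length b \<and> length b \<le> length (p@[x]) + length q"
    proof (rule Cons.IH)
      show "strict_chain G act (p @ [x])" using Cons.prems(1) True by (rule strict_chain_snoc)
    qed (use Cons.prems in auto)
    then show ?thesis by auto
  next
    case False
    then have eq: "pstab G act (set p \<union> {x}) = pstab G act (set p)"
      using pstab_anti[of "set p" "set p \<union> {x}" G act] by auto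
    have "pstab G act (set p \<union> set q) = pstab G act (set p \<union> {x}) \<inter> pstab G act (set q)"
      using eq by (simp add: pstab_Un)
    also have "\<dots> = pstab G act \<Omega>" using Cons.prems(4)
      by (metis insert_is_Un list.simps(15) pstab_Un sup_assoc sup_commute)
    finally have "\<exists>b. irredundant_base G act \<Omega> b \<and> length p \<le> length b \<and> length b \<le> length p + length q"
      using Cons.IH Cons.prems by auto
    then show ?thesis by auto
  qed
qed

abbreviation e :: "'n::finite \<Rightarrow> bit^'n" where "e k \<equiv> axis k 1"

definition S :: "'n::finite \<Rightarrow> 'n \<Rightarrow> (bit^'n) set" where
  "S u v = vec.span {e u, e v}"

definition T :: "'n::finite \<Rightarrow> bit^'n \<Rightarrow> bit^'n^'n" where
  "T j w = (\<chi> i k. (if i = k then 1 else 0) + (if k = j then w$i else 0))"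

lemma T_mult: "T j w *v v = v + (v$j) *s w"
proof -
  have "(T j w *v v)$i = v$i + v$j * w$i" for i
  proof -
    have "(T j w *v v)$i = (\<Sum>k\<in>UNIV. ((if i = k then 1 else 0) + (if k = j then w$i else 0)) * v$k)"
      by (simp add: T_def matrix_vector_mult_def)
    also have "\<dots> = (\<Sum>k\<in>UNIV. (if i = k then v$k else 0) + (if k = j then w$i * v$k else 0))"
      by (rule sum.cong) auto
    also have "\<dots> = (\<Sum>k\<in>UNIV. (if i = k then v$k else 0)) + (\<Sum>k\<in>UNIV. (if k = j then w$i * v$k else 0))"
      by (rule sum.distrib)
    also have "\<dots> = v$i + w$i * v$j" by (simp only: sum.delta sum.delta' finite UNIV_I if_True)
    also have "\<dots> = v$i + v$j * w$i" by (simp only: mult.commute)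
    finally show ?thesis .
  qed
  then show ?thesis by (simp add: vec_eq_iff mult.commute)
qed

lemma bit_vec_add_self: "(x::bit^'n) + x = 0" by (simp add: vec_eq_iff)

lemma T_GL: fixes j :: "'n::finite" assumes "w$j = 0" shows "T j w \<in> GL2"
proof -
  have "T j w ** T j w = mat 1"
  proof (subst matrix_eq, intro allI)
    fix x :: "bit^'n"
    have "(T j w ** T j w) *v x = T j w *v (T j w *v x)" by (simp add: matrix_vector_mul_assoc)
    also have "\<dots> = x + (x$j) *s w + (x$j + x$j * w$j) *s w" by (simp add: T_mult)
    also have "\<dots> = x" using assms by (simp add: vec_eq_iff algebra_simps)
    finally show "(T j w ** T j w) *v x = mat 1 *v x" by simp
  qed
  then show ?thesis unfolding GL2_def invertible_left_inverse by auto
qed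

lemma I_GL: "mat 1 \<in> GL2"
  unfolding GL2_def invertible_left_inverse by (auto intro: exI[of _ "mat 1"])

lemma mat_act_span: "mat_act A (vec.span X) = vec.span ((*v) A ` X)"
  unfolding mat_act_def by (simp add: vec.span_image)

lemma span_comp0:
  fixes i :: "'m::finite" and X :: "(bit^'m) set"
  assumes "x \<in> vec.span X" "\<forall>y\<in>X. y$i = 0" shows "x$i = 0"
proof -
  have "vec.subspace {x::bit^'m. x$i = 0}"
    by (auto simp: vec.subspace_def)
  then have "vec.span X \<subseteq> {x. x$i = 0}" using assms(2) by (intro vec.span_minimal) auto
  then show ?thesis using assms(1) by auto
qed

lemma S_comp0: "x \<in> S u v \<Longrightarrow> i \<noteq> u \<Longrightarrow> i \<noteq> v \<Longrightarrow> x$i = 0"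
  unfolding S_def by (erule span_comp0) (auto simp: axis_def)

lemma e_in_S: "e u \<in> S u v" "e v \<in> S u v"
  unfolding S_def by (auto intro: vec.span_base)

lemma fix_S: assumes "A *v e u = e u" "A *v e v = e v" shows "mat_act A (S u v) = S u v"
  unfolding S_def mat_act_span using assms by simp

lemma moves:
  assumes "y \<in> W" "(A *v y)$i = 1" "\<forall>x\<in>W. x$i = 0" shows "mat_act A W \<noteq> W"
proof
  assume "mat_act A W = W"
  moreover have "A *v y \<in> mat_act A W" using assms(1) unfolding mat_act_def by auto
  ultimately show False using assms by fastforce
qed

lemma S_in: assumes "u \<noteq> v" shows "S u v \<in> subspaces2"
proof -
  have ind: "vec.independent {e u, e v}"
    by (rule vec.independent_mono[OF independent_cart_basis]) (auto simp: cart_basis_def)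
  have "card {e u, e v} = 2" using assms by (simp add: axis_eq_axis)
  then show ?thesis unfolding subspaces2_def S_def
    using vec.dim_span_eq_card_independent[OF ind] by simp
qed

lemma T_fix_e: "i \<noteq> j \<Longrightarrow> T j w *v e i = e i"
  by (simp add: T_mult axis_def)

lemma pstab_iff: "g \<in> pstab GL2 mat_act X \<longleftrightarrow> g \<in> GL2 \<and> (\<forall>W\<in>X. mat_act g W = W)"
  unfolding pstab_def by auto


definition ch :: "'n::finite \<Rightarrow> 'n \<Rightarrow> 'n list \<Rightarrow> (bit^'n) set list" where
  "ch a b rest = S a b # concat (map (\<lambda>j. [S a j, S b j]) rest)"

lemma ch_length: "length (ch a b rest) = 1 + 2 * length rest"
  unfolding ch_def by (induction rest) auto

lemma ch_snoc: "ch a b (rest @ [j]) = (ch a b rest @ [S a j]) @ [S b j]"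
  unfolding ch_def by simp

lemma ch_elems: "W \<in> set (ch a b rest) \<Longrightarrow> \<exists>u v. W = S u v \<and> u \<in> {a,b} \<and> (v = b \<or> v \<in> set rest)"
  unfolding ch_def by auto

lemma span_swap: "vec.span {x, y + x} = vec.span {x, (y::bit^'n)}"
proof
  show "vec.span {x, y + x} \<subseteq> vec.span {x, y}"
    by (intro vec.span_minimal) (auto intro: vec.span_add vec.span_base)
  have "y = (y + x) + x" by (simp add: add.assoc bit_vec_add_self)
  then have "y \<in> vec.span {x, y + x}"
    by (metis insertCI vec.span_add vec.span_base)
  then show "vec.span {x, y} \<subseteq> vec.span {x, y + x}"
    by (intro vec.span_minimal) (auto intro: vec.span_base)
qed

lemma T_fixes_S: "u \<noteq> j \<Longrightarrow> v \<noteq> j \<Longrightarrow> mat_act (T j w) (S u v) = S u v"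
  by (rule fix_S) (simp_all add: T_fix_e)

lemma chain_ok:
  fixes a b c :: "'n::finite"
  assumes "distinct (a#b#rest)" "c \<noteq> a" "c \<noteq> b"
  shows "strict_chain GL2 mat_act (ch a b rest) \<and> set (ch a b rest) \<subseteq> subspaces2"
  using assms(1)
proof (induction rest rule: rev_induct)
  case Nil
  have gl: "T a (e c) \<in> GL2" using assms by (intro T_GL) (simp add: axis_def)
  have mv: "mat_act (T a (e c)) (S a b) \<noteq> S a b"
  proof (rule moves[of "e a" _ _ c])
    show "e a \<in> S a b" by (rule e_in_S)
    show "(T a (e c) *v e a) $ c = 1" using assms by (simp add: T_mult axis_def)
    show "\<forall>x\<in>S a b. x $ c = 0" using assms by (auto intro: S_comp0)
  qed
  have "strict_chain GL2 mat_act ([] @ [S a b])"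
  proof (rule strict_chain_snoc[OF strict_chain_Nil])
    show "pstab GL2 mat_act (set [] \<union> {S a b}) \<subset> pstab GL2 mat_act (set [])"
    proof -
      have "T a (e c) \<in> pstab GL2 mat_act (set [])" using gl by (auto simp: pstab_iff)
      moreover have "T a (e c) \<notin> pstab GL2 mat_act (set [] \<union> {S a b})" using mv by (auto simp: pstab_iff)
      ultimately show ?thesis
        using pstab_anti[of "set []" "set [] \<union> {S a b}" GL2 mat_act] by blast
    qed
  qed
  then show ?case using Nil S_in by (simp add: ch_def)
next
  case (snoc j rest)
  let ?P = "ch a b rest"
  have d: "distinct (a#b#rest)" "j \<noteq> a" "j \<noteq> b" "j \<notin> set rest" "a \<noteq> b"
    using snoc.prems by auto
  have IH: "strict_chain GL2 mat_act ?P" "set ?P \<subseteq> subspaces2" using snoc.IH d(1) by auto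
  have fixP: "mat_act (T j w) W = W" if hW: "W \<in> set ?P" for w W
  proof -
    obtain u v where "W = S u v" "u \<in> {a,b}" "v = b \<or> v \<in> set rest"
      using ch_elems[OF hW] by blast
    then show ?thesis using d by (auto intro!: T_fixes_S)
  qed
  define g1 where "g1 = T j (e a + e b)"
  have g1: "g1 \<in> GL2" unfolding g1_def using d by (intro T_GL) (simp add: axis_def)
  have mv1: "mat_act g1 (S a j) \<noteq> S a j"
  proof (rule moves[of "e j" _ _ b])
    show "e j \<in> S a j" by (rule e_in_S)
    show "(g1 *v e j) $ b = 1" using d by (simp add: g1_def T_mult axis_def)
    show "\<forall>x\<in>S a j. x $ b = 0" using d by (auto intro: S_comp0)
  qed
  have s1: "strict_chain GL2 mat_act (?P @ [S a j])"
  proof (rule strict_chain_snoc[OF IH(1)])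
    have "g1 \<in> pstab GL2 mat_act (set ?P)" using g1 fixP unfolding g1_def by (auto simp: pstab_iff)
    moreover have "g1 \<notin> pstab GL2 mat_act (set ?P \<union> {S a j})" using mv1 by (auto simp: pstab_iff)
    ultimately show "pstab GL2 mat_act (set ?P \<union> {S a j}) \<subset> pstab GL2 mat_act (set ?P)"
      using pstab_anti[of "set ?P" "set ?P \<union> {S a j}" GL2 mat_act] by blast
  qed
  define g2 where "g2 = T j (e a)"
  have g2: "g2 \<in> GL2" unfolding g2_def using d by (intro T_GL) (simp add: axis_def)
  have fix2: "mat_act g2 (S a j) = S a j"
  proof -
    have "mat_act g2 (S a j) = vec.span {g2 *v e a, g2 *v e j}"
      unfolding S_def mat_act_span by simp
    also have "g2 *v e a = e a" unfolding g2_def using d by (simp add: T_fix_e)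
    also have "g2 *v e j = e j + e a" unfolding g2_def by (simp add: T_mult)
    finally show ?thesis unfolding S_def by (simp add: span_swap)
  qed
  have mv2: "mat_act g2 (S b j) \<noteq> S b j"
  proof (rule moves[of "e j" _ _ a])
    show "e j \<in> S b j" by (rule e_in_S)
    show "(g2 *v e j) $ a = 1" using d by (simp add: g2_def T_mult axis_def)
    show "\<forall>x\<in>S b j. x $ a = 0" using d by (auto intro: S_comp0)
  qed
  have s2: "strict_chain GL2 mat_act ((?P @ [S a j]) @ [S b j])"
  proof (rule strict_chain_snoc[OF s1])
    have "g2 \<in> pstab GL2 mat_act (set (?P @ [S a j]))" using g2 fixP fix2 unfolding g2_def by (auto simp: pstab_iff)
    moreover have "g2 \<notin> pstab GL2 mat_act (set (?P @ [S a j]) \<union> {S b j})" using mv2 by (auto simp: pstab_iff)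
    ultimately show "pstab GL2 mat_act (set (?P @ [S a j]) \<union> {S b j}) \<subset> pstab GL2 mat_act (set (?P @ [S a j]))"
      using pstab_anti[of "set (?P @ [S a j])" "set (?P @ [S a j]) \<union> {S b j}" GL2 mat_act] by blast
  qed
  moreover have "S a j \<in> subspaces2" "S b j \<in> subspaces2" using d by (auto intro!: S_in)
  ultimately show ?case using IH(2) by (auto simp: ch_snoc)
qed


definition nxt :: "nat \<Rightarrow> nat \<Rightarrow> nat" where
  "nxt d i = (if Suc i < d then Suc i else 0)"

definition cyc :: "'n::finite list \<Rightarrow> (bit^'n) set list" where
  "cyc xs = map (\<lambda>i. S (xs!i) (xs!(nxt (length xs) i))) [0..<length xs]"

lemma GL_inj: assumes "A \<in> GL2" "A *v x = 0" shows "x = (0::bit^'n::finite)"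
proof -
  obtain B :: "bit^'n^'n" where "B ** A = mat 1" using assms(1) unfolding GL2_def invertible_left_inverse by auto
  then have "x = B *v (A *v x)" by (simp add: matrix_vector_mul_assoc)
  then show ?thesis using assms(2) by simp
qed

lemma col: "((A::bit^'n^'n) *v e k) $ i = A$i$k"
  by (simp add: matrix_vector_mult_def axis_def if_distrib if_distribR cong: if_cong)

lemma cyc_trivial:
  fixes xs :: "'n::finite list"
  assumes "distinct xs" "set xs = UNIV" "length xs \<ge> 3" "A \<in> pstab GL2 mat_act (set (cyc xs))"
  shows "A = mat 1"
proof -
  let ?d = "length xs"
  have AGL: "A \<in> GL2" and fixA: "\<And>W. W \<in> set (cyc xs) \<Longrightarrow> mat_act A W = W"
    using assms(4) by (auto simp: pstab_iff)
  have ek: "A *v e k = e k" for k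
  proof -
    obtain i where i: "i < ?d" "xs!i = k" using assms(2) by (metis UNIV_I in_set_conv_nth)
    define p where "p = (if i = 0 then ?d - 1 else i - 1)"
    define n where "n = nxt ?d i"
    have pn: "p < ?d" "n < ?d" "p \<noteq> i" "n \<noteq> i" "n \<noteq> p" "nxt ?d p = i"
      using i assms(3) by (auto simp: p_def n_def nxt_def)
    have xn: "xs!n \<noteq> k" "xs!p \<noteq> k" "xs!n \<noteq> xs!p"
      using pn i assms(1) by (auto simp: nth_eq_iff_index_eq)
    have W1: "S k (xs!n) \<in> set (cyc xs)" unfolding cyc_def using i pn unfolding n_def
      by (auto intro!: image_eqI[of _ _ i])
    have W2: "S (xs!p) k \<in> set (cyc xs)" unfolding cyc_def using i pn
      by (auto intro!: image_eqI[of _ _ p])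
    have "A *v e k \<in> mat_act A (S k (xs!n))"
      unfolding mat_act_def by (rule imageI, rule e_in_S(1))
    then have m1: "A *v e k \<in> S k (xs!n)" by (simp only: fixA[OF W1])
    have "A *v e k \<in> mat_act A (S (xs!p) k)"
      unfolding mat_act_def by (rule imageI, rule e_in_S(2))
    then have m2: "A *v e k \<in> S (xs!p) k" by (simp only: fixA[OF W2])
    have z: "(A *v e k) $ t = 0" if "t \<noteq> k" for t
    proof (cases "t = xs!n")
      case True
      then show ?thesis using S_comp0[OF m2] xn that by auto
    next
      case False
      then show ?thesis using S_comp0[OF m1] that by auto
    qed
    have "(A *v e k) $ k \<noteq> 0"
    proof
      assume "(A *v e k) $ k = 0"
      then have "A *v e k = 0" using z unfolding vec_eq_iff by (metis zero_index)
      then have "e k = (0::bit^'n)" using GL_inj[OF AGL] by blast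
      then show False by (simp add: axis_eq_0_iff)
    qed
    then have "(A *v e k) $ k = 1" by simp
    then show ?thesis using z by (auto simp: vec_eq_iff axis_def)
  qed
  show ?thesis
  proof (subst vec_eq_iff, intro allI, subst vec_eq_iff, intro allI)
    fix i k
    have "A$i$k = (A *v e k) $ i" by (simp add: col)
    also have "\<dots> = mat 1 $ i $ k" using ek[of k] by (simp add: axis_def mat_def)
    finally show "A$i$k = mat 1 $ i $ k" .
  qed
qed

lemma cyc_sub: "distinct xs \<Longrightarrow> length xs \<ge> 3 \<Longrightarrow> set (cyc xs) \<subseteq> subspaces2"
proof -
  assume a: "distinct xs" "length xs \<ge> 3"
  have "xs ! i \<noteq> xs ! (nxt (length xs) i)" if "i < length xs" for i
  proof -
    have "nxt (length xs) i < length xs" "nxt (length xs) i \<noteq> i"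
      using a that by (auto simp: nxt_def)
    then show ?thesis using a(1) that nth_eq_iff_index_eq by metis
  qed
  then show ?thesis unfolding cyc_def by (auto intro!: S_in)
qed

lemma mat1_pstab: "mat 1 \<in> pstab GL2 mat_act X"
  by (auto simp: pstab_iff I_GL mat_act_def)

theorem lemma3p3:
  assumes "CARD('n::finite) \<ge> 4"
  shows "\<not> IBIS (GL2 :: (bit ^ 'n ^ 'n) set) mat_act subspaces2"
proof
  assume ibis: "IBIS (GL2 :: (bit ^ 'n ^ 'n) set) mat_act subspaces2"
  obtain xs :: "'n list" where xs: "distinct xs" "set xs = UNIV"
    using finite_distinct_list[of "UNIV :: 'n set"] by auto
  have len: "length xs = CARD('n)" using xs by (metis distinct_card)
  then have len4: "length xs \<ge> 4" using assms by simp
  define a where "a = xs!0"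
  define b where "b = xs!1"
  define c where "c = xs!2"
  define rest where "rest = drop 2 xs"
  have xsd: "xs = a # b # rest" using len4 unfolding a_def b_def rest_def
    by (cases xs; cases "tl xs") auto
  have cab: "c \<noteq> a" "c \<noteq> b" using xs(1) len4 unfolding a_def b_def c_def
  proof -
    have l: "2 < length xs" "0 < length xs" "1 < length xs" using len4 by auto
    show "xs!2 \<noteq> xs!0" using nth_eq_iff_index_eq[OF xs(1) l(1) l(2)] by simp
    show "xs!2 \<noteq> xs!1" using nth_eq_iff_index_eq[OF xs(1) l(1) l(3)] by simp
  qed
  have chk: "strict_chain GL2 mat_act (ch a b rest) \<and> set (ch a b rest) \<subseteq> subspaces2"
  proof (rule chain_ok[OF _ cab])
    show "distinct (a#b#rest)" using xs(1) xsd by simp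
  qed
  have triv: "pstab GL2 mat_act (set (cyc xs)) = pstab GL2 mat_act subspaces2"
  proof
    show "pstab GL2 mat_act (set (cyc xs)) \<subseteq> pstab GL2 mat_act subspaces2"
      using cyc_trivial[OF xs] len4 mat1_pstab by auto
    show "pstab GL2 mat_act subspaces2 \<subseteq> pstab GL2 mat_act (set (cyc xs))"
      using cyc_sub[OF xs(1)] len4 by (intro pstab_anti) auto
  qed
  have csub: "set (cyc xs) \<subseteq> subspaces2" using cyc_sub[OF xs(1)] len4 by auto
  obtain b1 where b1: "irredundant_base (GL2 :: (bit^'n^'n) set) mat_act subspaces2 b1" "length (ch a b rest) \<le> length b1"
  proof -
    have "pstab GL2 mat_act (set (ch a b rest) \<union> set (cyc xs)) = pstab GL2 mat_act subspaces2"
    proof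
      show "pstab GL2 mat_act (set (ch a b rest) \<union> set (cyc xs)) \<subseteq> pstab GL2 mat_act subspaces2"
        using triv pstab_anti[of "set (cyc xs)" "set (ch a b rest) \<union> set (cyc xs)" GL2 mat_act] by auto
      show "pstab GL2 mat_act subspaces2 \<subseteq> pstab GL2 mat_act (set (ch a b rest) \<union> set (cyc xs))"
        using chk csub by (intro pstab_anti) auto
    qed
    from extend_base[OF chk[THEN conjunct1] chk[THEN conjunct2] csub this]
    obtain bb where "irredundant_base (GL2 :: (bit^'n^'n) set) mat_act subspaces2 bb" "length (ch a b rest) \<le> length bb"
      by blast
    then show ?thesis by (rule that)
  qed
  obtain b2 where b2: "irredundant_base (GL2 :: (bit^'n^'n) set) mat_act subspaces2 b2" "length b2 \<le> length (cyc xs)"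
    using extend_base[of GL2 mat_act "[]" subspaces2 "cyc xs"] strict_chain_Nil csub triv by auto
  have "length b1 = length b2" using ibis b1(1) b2(1) unfolding IBIS_def by blast
  moreover have "length (ch a b rest) = 2 * length xs - 3" using xsd by (simp add: ch_length)
  moreover have "length (cyc xs) = length xs" by (simp add: cyc_def)
  ultimately show False using b1(2) b2(2) len4 by linarith
qed

end
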